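(* Consider the self-attention dynamics without LayerNorm, $X^{(t+1)}=A^{(t)}X^{(t)}W_V^{(t)}$, started from an arbitrary $X^{(0)}\in\mathbb{R}^{N\times d}$, and assume \textbf{A1}, \textbf{A2} and \textbf{A3}. If $\mathcal{G}$ is quasi-strongly connected with radius $r$, then there exists $\epsilon>0$ such that for all $t\ge 0$, $$A^{(t)}_{i,j}\ge \epsilon\quad\text{for all }(j,i)\in E(\mathcal{G}),$$ and there exists $C>0$ such that $$\mu(X^{(t)})\le C\,(1-\epsilon^r)^{t/r}\qquad\text{for all }t\ge 0,$$ i.e. all rows (tokens) of $X^{(t)}$ converge exponentially to a common vector.
   Context: Tokens are the rows of $X\in\mathbb{R}^{N\times d}$. An attention mask is a directed graph $\mathcal{G}$ on the node set $[N]=\{1,\dots,N\}$ with edge set $E(\mathcal{G})$; an edge $(j,i)\in E(\mathcal{G})$ means token $i$ attends to token $j$, and $\mathcal{N}_i=\{k:(k,i)\in E(\mathcal{G})\}$. For $R\in\mathbb{R}^{N\times N}$, the masked softmax is $\mathrm{softmax}_{\mathcal{G}}(R)_{ij}=\exp(R_{ij})/\sum_{k\in\mathcal{N}_i}\exp(R_{ik})$ if $(j,i)\in E(\mathcal{G})$ and $0$ otherwise. The attention matrices are $A^{(t)}=\mathrm{softmax}_{\mathcal{G}}\big(X^{(t)}W_Q^{(t)}(X^{(t)}W_K^{(t)})^\top/\sqrt{d_{QK}}\big)$ with a fixed constant $d_{QK}>0$, query/key matrices $W_Q^{(t)},W_K^{(t)}\in\mathbb{R}^{d\times d'}$ and value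 matrices $W_V^{(t)}\in\mathbb{R}^{d\times d}$; the mask $\mathcal{G}$ is the same for all $t$. Assumptions: \textbf{A1}: $(i,i)\in E(\mathcal{G})$ for every $i\in[N]$. \textbf{A2}: there is a constant $C'$ with $\max\{\|W_Q^{(t)}\|_2,\|W_K^{(t)}\|_2\}\le C'$ for all $t$. \textbf{A3}: the sequence $\big\{\|W_V^{(0)}W_V^{(1)}\cdots W_V^{(k)}\|_2\big\}_{k\ge0}$ is bounded. Similarity measure: $\mu(X)=\|X-\mathbf{1}\mathbf{1}^\top X/N\|_F$, where $\mathbf{1}\in\mathbb{R}^N$ is the all-ones vector. Graph notions: $v$ is reachable from $u$ if there is a directed path from $u$ to $v$; a center node is a node from which every node is reachable; $\mathcal{G}$ is quasi-strongly connected if it has at least one center node. The distance $\mathrm{dist}(u,v)$ is the length of a shortest directed path from $u$ to $v$; the radius of a quasi-strongly connected graph is $\min_{c\text{ center}}\max_{v}\mathrm{dist}(c,v)$. *)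

theory Defs
  imports "HOL-Analysis.Analysis"
begin

text \<open>Matrices are type-indexed: an N x d matrix is real^'d^'n (rows indexed by 'n).
  The mask is an edge set E :: ('n * 'n) set; (j,i) \<in> E means token i attends to token j.\<close>

definition masked_softmax :: "('n::finite \<times> 'n) set \<Rightarrow> real^'n^'n \<Rightarrow> real^'n^'n" where
  "masked_softmax E R = (\<chi> i j. if (j, i) \<in> E
      then exp (R $ i $ j) / (\<Sum>k\<in>{k. (k, i) \<in> E}. exp (R $ i $ k)) else 0)"

definition attn_matrix ::
  "('n::finite \<times> 'n) set \<Rightarrow> real \<Rightarrow> real^'d^'n \<Rightarrow> real^'k^'d \<Rightarrow> real^'k^'d \<Rightarrow> real^'n^'n" where
  "attn_matrix E dQK X WQ WK =
     masked_softmax E ((1 / sqrt dQK) *\<^sub>R ((X ** WQ) ** transpose (X ** WK)))"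

definition spec_norm :: "real^'m^'n \<Rightarrow> real" where
  "spec_norm M = onorm (\<lambda>x. M *v x)"

fun mat_prod_upto :: "(nat \<Rightarrow> real^'d^'d) \<Rightarrow> nat \<Rightarrow> real^'d^'d" where
  "mat_prod_upto W 0 = W 0"
| "mat_prod_upto W (Suc k) = mat_prod_upto W k ** W (Suc k)"

text \<open>mu(X) = || X - 1 1^T X / N ||_F (the norm on real^'d^'n is the Frobenius norm).\<close>
definition mu :: "real^'d^'n::finite \<Rightarrow> real" where
  "mu X = norm (\<chi> i j. X $ i $ j - (\<Sum>k\<in>UNIV. X $ k $ j) / real CARD('n))"

definition reachable :: "('n \<times> 'n) set \<Rightarrow> 'n \<Rightarrow> 'n \<Rightarrow> bool" where
  "reachable E u v \<longleftrightarrow> (u, v) \<in> E\<^sup>*"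

definition is_center :: "('n \<times> 'n) set \<Rightarrow> 'n \<Rightarrow> bool" where
  "is_center E c \<longleftrightarrow> (\<forall>v. reachable E c v)"

definition quasi_strongly_connected :: "('n \<times> 'n) set \<Rightarrow> bool" where
  "quasi_strongly_connected E \<longleftrightarrow> (\<exists>c. is_center E c)"

definition gdist :: "('n \<times> 'n) set \<Rightarrow> 'n \<Rightarrow> 'n \<Rightarrow> nat" where
  "gdist E u v = (LEAST k. (u, v) \<in> E ^^ k)"

definition radius :: "('n::finite \<times> 'n) set \<Rightarrow> nat" where
  "radius E = Min ((\<lambda>c. Max (range (gdist E c))) ` {c. is_center E c})"

end

theory Submission
  imports Defs
begin

definition stoch :: "real^'n::finite^'n \<Rightarrow> bool" where
  "stoch B \<longleftrightarrow> (\<forall>i j. 0 \<le> B$i$j) \<and> (\<forall>i. (\<Sum>j\<in>UNIV. B$i$j) = 1)"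

lemma stoch_softmax:
  fixes E :: "('n::finite \<times> 'n) set"
  assumes "\<And>i. (i,i)\<in>E" shows "stoch (masked_softmax E R)"
proof -
  have pos: "0 < (\<Sum>k\<in>{k. (k, i) \<in> E}. exp (R $ i $ k))" for i
    by (rule sum_pos2[of _ i]) (use assms in auto)
  have "(\<Sum>j\<in>UNIV. masked_softmax E R $ i $ j) = 1" for i
  proof -
    have "(\<Sum>j\<in>UNIV. masked_softmax E R $ i $ j)
       = (\<Sum>j\<in>{j. (j,i)\<in>E}. exp (R $ i $ j) / (\<Sum>k\<in>{k. (k, i) \<in> E}. exp (R $ i $ k)))"
      unfolding masked_softmax_def by (simp add: sum.If_cases)
    also have "\<dots> = 1" using pos[of i] by (simp add: sum_divide_distrib[symmetric])
    finally show ?thesis .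
  qed
  moreover have "0 \<le> masked_softmax E R $ i $ j" for i j
    using pos[of i] unfolding masked_softmax_def by simp
  ultimately show ?thesis unfolding stoch_def by auto
qed

lemma stoch_mult: assumes "stoch A" "stoch B" shows "stoch (A ** B)"
proof -
  have "(\<Sum>j\<in>UNIV. (A ** B)$i$j) = 1" for i
  proof -
    have "(\<Sum>j\<in>UNIV. (A ** B)$i$j) = (\<Sum>k\<in>UNIV. A$i$k * (\<Sum>j\<in>UNIV. B$k$j))"
      by (simp add: matrix_matrix_mult_def sum_distrib_left) (rule sum.swap)
    also have "\<dots> = 1" using assms unfolding stoch_def by simp
    finally show ?thesis .
  qed
  moreover have "0 \<le> (A ** B)$i$j" for i j
    using assms unfolding stoch_def matrix_matrix_mult_def by (auto intro!: sum_nonneg)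
  ultimately show ?thesis unfolding stoch_def by auto
qed

lemma stoch_id: "stoch (mat 1 :: real^'n::finite^'n)"
  unfolding stoch_def mat_def by (simp add: sum.delta)

definition osc :: "real^'n::finite \<Rightarrow> real" where
  "osc y = Max (range (\<lambda>i. y$i)) - Min (range (\<lambda>i. y$i))"

lemma osc_diff: "\<bar>y$i - y$k\<bar> \<le> osc (y::real^'n::finite)"
proof -
  have "y$i \<le> Max (range (\<lambda>i. y$i))" "y$k \<le> Max (range (\<lambda>i. y$i))"
       "Min (range (\<lambda>i. y$i)) \<le> y$i" "Min (range (\<lambda>i. y$i)) \<le> y$k" by auto
  thus ?thesis unfolding osc_def by linarith
qed

lemma osc_contract:
  fixes B :: "real^'n::finite^'n"
  assumes "stoch B" "0 \<le> \<delta>" "\<And>i. \<delta> \<le> B$i$c"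
  shows "osc (B *v y) \<le> (1-\<delta>) * osc y"
proof -
  define M where "M = Max (range (\<lambda>i. y$i))"
  define m where "m = Min (range (\<lambda>i. y$i))"
  have yM: "y$l \<le> M" "m \<le> y$l" for l unfolding M_def m_def by auto
  have bnd: "\<delta> * y$c + (1-\<delta>) * m \<le> (B *v y)$i \<and> (B *v y)$i \<le> \<delta> * y$c + (1-\<delta>) * M" for i
  proof -
    define w where "w l = B$i$l - (if l = c then \<delta> else 0)" for l
    have w0: "0 \<le> w l" for l using assms unfolding w_def stoch_def by auto
    have sw: "(\<Sum>l\<in>UNIV. w l) = 1 - \<delta>"
      using assms(1) unfolding w_def stoch_def by (simp add: sum_subtractf)
    have e: "(B *v y)$i = \<delta> * y$c + (\<Sum>l\<in>UNIV. w l * y$l)"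
      unfolding w_def matrix_vector_mult_def
      by (simp add: left_diff_distrib sum_subtractf if_distrib[of "\<lambda>x. x * _"] sum.If_cases)
    have "(\<Sum>l\<in>UNIV. w l * y$l) \<le> (\<Sum>l\<in>UNIV. w l * M)"
      by (rule sum_mono) (simp add: mult_left_mono w0 yM)
    moreover have "(\<Sum>l\<in>UNIV. w l * m) \<le> (\<Sum>l\<in>UNIV. w l * y$l)"
      by (rule sum_mono) (simp add: mult_left_mono w0 yM)
    ultimately show ?thesis using sw unfolding e by (simp add: sum_distrib_right[symmetric])
  qed
  have "Max (range (\<lambda>i. (B *v y)$i)) \<le> \<delta> * y$c + (1-\<delta>) * M" using bnd by auto
  moreover have "\<delta> * y$c + (1-\<delta>) * m \<le> Min (range (\<lambda>i. (B *v y)$i))" using bnd by auto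
  ultimately show ?thesis unfolding osc_def M_def[symmetric] m_def[symmetric] by argo
qed

lemma vm_norm:
  fixes W :: "real^'m::finite^'n::finite"
  shows "norm (x v* W) \<le> norm x * spec_norm W"
proof -
  let ?v = "x v* W"
  have "norm ?v ^ 2 = inner x (W *v ?v)" by (simp add: dot_lmul_matrix power2_norm_eq_inner)
  also have "\<dots> \<le> norm x * norm (W *v ?v)" by (rule norm_cauchy_schwarz)
  also have "\<dots> \<le> norm x * (spec_norm W * norm ?v)"
    unfolding spec_norm_def by (intro mult_left_mono onorm) auto
  finally have "norm ?v * norm ?v \<le> (norm x * spec_norm W) * norm ?v"
    by (simp add: power2_eq_square mult_ac)
  moreover have "0 \<le> norm x * spec_norm W"
    unfolding spec_norm_def by (intro mult_nonneg_nonneg onorm_pos_le) auto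
  ultimately show ?thesis
    by (cases "norm ?v = 0") (auto simp: mult_le_cancel_right)
qed

lemma row_mult: "(Y ** W) $ i = Y $ i v* W"
  by (simp add: matrix_matrix_mult_def vector_matrix_mult_def vec_eq_iff mult.commute)

definition col :: "'j \<Rightarrow> real^'j^'n \<Rightarrow> real^'n" where "col j Y = (\<chi> i. Y$i$j)"

lemma col_mult: "col j (Q ** Y) = Q *v col j Y"
  by (simp add: col_def matrix_matrix_mult_def matrix_vector_mult_def vec_eq_iff)

lemma mult_transpose_entry: "(P ** transpose Q) $ i $ j = inner (P$i) (Q$j)"
  by (simp add: matrix_matrix_mult_def transpose_def inner_vec_def)


fun Qp :: "(nat \<Rightarrow> real^'n::finite^'n) \<Rightarrow> nat \<Rightarrow> nat \<Rightarrow> real^'n^'n" where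
  "Qp A 0 t = mat 1" | "Qp A (Suc m) t = A (t+m) ** Qp A m t"

fun Yseq :: "(nat \<Rightarrow> real^'n::finite^'n) \<Rightarrow> real^'d^'n \<Rightarrow> nat \<Rightarrow> real^'d^'n" where
  "Yseq A Y0 0 = Y0" | "Yseq A Y0 (Suc t) = A t ** Yseq A Y0 t"

lemma Yseq_shift: "Yseq A Y0 (t+m) = Qp A m t ** Yseq A Y0 t"
  by (induction m) (simp_all add: matrix_mul_assoc)

lemma Qp_stoch: "(\<And>t. stoch (A t)) \<Longrightarrow> stoch (Qp A m t)"
  by (induction m) (simp_all add: stoch_id stoch_mult)

lemma Qp_lower:
  assumes st: "\<And>t. stoch (A t)" and e0: "0 \<le> \<epsilon>"
    and lb: "\<And>t i j. (j,i)\<in>E \<Longrightarrow> \<epsilon> \<le> A t$i$j"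
  shows "(c,i)\<in>E^^m \<Longrightarrow> \<epsilon>^m \<le> Qp A m t $ i $ c"
proof (induction m arbitrary: i)
  case 0 then show ?case by (simp add: mat_def)
next
  case (Suc m)
  then obtain k where k: "(c,k)\<in>E^^m" "(k,i)\<in>E" by auto
  have "\<epsilon>^Suc m = \<epsilon> * \<epsilon>^m" by simp
  also have "\<dots> \<le> A (t+m)$i$k * Qp A m t $ k $ c"
    by (intro mult_mono lb k Suc.IH) (use e0 st Qp_stoch[where A=A, OF st] in \<open>auto simp: stoch_def\<close>)
  also have "\<dots> \<le> (\<Sum>l\<in>UNIV. A (t+m)$i$l * Qp A m t $ l $ c)"
    by (rule member_le_sum[where f="\<lambda>l. A (t+m)$i$l * Qp A m t $ l $ c"])
       (use st Qp_stoch[where A=A, OF st] in \<open>auto simp: stoch_def\<close>)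
  finally show ?case by (simp add: matrix_matrix_mult_def)
qed

lemma relpow_pad:
  assumes refl: "\<And>i. (i,i)\<in>E" shows "(c,v)\<in>E^^m \<Longrightarrow> m \<le> n \<Longrightarrow> (c,v)\<in>E^^n"
proof (induction n)
  case 0 then show ?case by simp
next
  case (Suc n)
  show ?case
  proof (cases "m = Suc n")
    case True with Suc show ?thesis by simp
  next
    case False with Suc have "(c,v)\<in>E^^n" by simp
    with refl[of v] show ?thesis by auto
  qed
qed

lemma center_radius:
  fixes E :: "('n::finite \<times> 'n) set"
  assumes refl: "\<And>i. (i,i)\<in>E" and q: "quasi_strongly_connected E"
  shows "\<exists>c. \<forall>v. (c,v) \<in> E^^(radius E)"
proof -
  let ?S = "(\<lambda>c. Max (range (gdist E c))) ` {c. is_center E c}"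
  have "?S \<noteq> {}" using q unfolding quasi_strongly_connected_def by auto
  hence "radius E \<in> ?S" unfolding radius_def by (intro Min_in) auto
  then obtain c where c: "is_center E c" "radius E = Max (range (gdist E c))" by auto
  have "(c,v) \<in> E^^(radius E)" for v
  proof -
    have "\<exists>k. (c,v)\<in>E^^k" using c(1) unfolding is_center_def reachable_def
      by (simp add: rtrancl_power)
    hence "(c,v)\<in>E^^(gdist E c v)" unfolding gdist_def by (rule LeastI_ex)
    moreover have "gdist E c v \<le> radius E" unfolding c(2) by (intro Max_ge) auto
    ultimately show ?thesis using relpow_pad[OF refl] by blast
  qed
  thus ?thesis by blast
qed

lemma osc_mono: "stoch B \<Longrightarrow> osc (B *v y) \<le> osc y"
  using osc_contract[of B 0 undefined y] by (simp add: stoch_def)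

lemma osc_Yseq_mono:
  assumes "\<And>t. stoch (A t)"
  shows "osc (col j (Yseq A Y0 (t+s))) \<le> osc (col j (Yseq A Y0 t))"
proof (induction s)
  case 0 then show ?case by simp
next
  case (Suc s)
  have "osc (col j (Yseq A Y0 (t + Suc s))) = osc (A (t+s) *v col j (Yseq A Y0 (t+s)))"
    by (simp add: col_mult)
  also have "\<dots> \<le> osc (col j (Yseq A Y0 (t+s)))" by (rule osc_mono) (rule assms)
  finally show ?case using Suc by simp
qed

lemma osc_Yseq_decay:
  assumes st: "\<And>t. stoch (A t)" and e0: "0 \<le> \<epsilon>" and e1: "\<epsilon> \<le> 1"
    and lb: "\<And>t i j. (j,i)\<in>E \<Longrightarrow> \<epsilon> \<le> A t$i$j"
    and c: "\<And>v. (c,v)\<in>E^^r"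
  shows "osc (col j (Yseq A Y0 (q*r+s))) \<le> (1-\<epsilon>^r)^q * osc (col j Y0)"
proof (induction q)
  case 0
  have "osc (col j (Yseq A Y0 (0+s))) \<le> osc (col j (Yseq A Y0 0))" by (rule osc_Yseq_mono) (rule st)
  then show ?case by simp
next
  case (Suc q)
  have "osc (col j (Yseq A Y0 (Suc q*r+s))) = osc (Qp A r (q*r+s) *v col j (Yseq A Y0 (q*r+s)))"
    using Yseq_shift[of A Y0 "q*r+s" r] by (simp add: col_mult add_ac)
  also have "\<dots> \<le> (1-\<epsilon>^r) * osc (col j (Yseq A Y0 (q*r+s)))"
    by (rule osc_contract[OF Qp_stoch[where A=A, OF st]]) (use e0 Qp_lower[where A=A, OF st e0 lb c] in auto)
  also have "\<dots> \<le> (1-\<epsilon>^r) * ((1-\<epsilon>^r)^q * osc (col j Y0))"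
    by (rule mult_left_mono[OF Suc]) (use e0 e1 power_le_one in auto)
  finally show ?case by simp
qed


lemma vm_diff: "(a - b) v* W = a v* W - b v* (W::real^'m::finite^'n::finite)"
  by (simp add: vector_matrix_mult_def vec_eq_iff left_diff_distrib sum_subtractf)

lemma mu_bound:
  fixes Y :: "real^'d::finite^'n::finite" and W :: "real^'e::finite^'d"
  assumes W: "\<And>x. norm (x v* W) \<le> Bw * norm x" and Bw: "0 \<le> Bw"
  shows "mu (Y ** W) \<le> real CARD('n) * Bw * (\<Sum>j\<in>UNIV. osc (col j Y))"
proof -
  let ?Z = "Y ** W"
  let ?N = "real CARD('n)"
  let ?S = "\<Sum>j\<in>UNIV. osc (col j Y)"
  define D where "D = (\<chi> i j. ?Z $ i $ j - (\<Sum>k\<in>UNIV. ?Z $ k $ j) / ?N)"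
  have Npos: "?N > 0" by simp
  have Di: "D $ i = (1 / ?N) *\<^sub>R (\<Sum>k\<in>UNIV. ?Z $ i - ?Z $ k)" for i
  proof -
    have "D $ i $ j = (1 / ?N) * (\<Sum>k\<in>UNIV. ?Z $ i $ j - ?Z $ k $ j)" for j
      using Npos unfolding D_def by (simp add: sum_subtractf field_simps)
    thus ?thesis by (simp add: vec_eq_iff sum_component)
  qed
  have key: "norm (?Z $ i - ?Z $ k) \<le> Bw * ?S" for i k
  proof -
    have "norm (?Z $ i - ?Z $ k) = norm ((Y$i - Y$k) v* W)" by (simp add: row_mult vm_diff)
    also have "\<dots> \<le> Bw * norm (Y$i - Y$k)" by (rule W)
    also have "norm (Y$i - Y$k) \<le> (\<Sum>j\<in>UNIV. \<bar>(Y$i - Y$k)$j\<bar>)" by (rule norm_le_l1_cart)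
    also have "\<dots> \<le> ?S"
    proof (rule sum_mono)
      fix j
      show "\<bar>(Y$i - Y$k)$j\<bar> \<le> osc (col j Y)"
        using osc_diff[of "col j Y" i k] by (simp add: col_def)
    qed
    finally show ?thesis using Bw by (simp add: mult_left_mono)
  qed
  have nDi: "norm (D $ i) \<le> Bw * ?S" for i
  proof -
    have "norm (D $ i) = (1 / ?N) * norm (\<Sum>k\<in>UNIV. ?Z $ i - ?Z $ k)" by (simp add: Di)
    also have "\<dots> \<le> (1 / ?N) * (\<Sum>k\<in>UNIV. norm (?Z $ i - ?Z $ k))"
      by (intro mult_left_mono norm_sum) simp
    also have "\<dots> \<le> (1 / ?N) * (\<Sum>k\<in>(UNIV::'n set). Bw * ?S)"
      by (intro mult_left_mono sum_mono key) simp
    also have "\<dots> = Bw * ?S" using Npos by simp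
    finally show ?thesis .
  qed
  have "mu ?Z = norm D" unfolding mu_def D_def ..
  also have "\<dots> \<le> (\<Sum>i\<in>UNIV. norm (D $ i))" unfolding norm_vec_def by (rule L2_set_le_sum) simp
  also have "\<dots> \<le> (\<Sum>i\<in>(UNIV::'n set). Bw * ?S)" by (intro sum_mono nDi)
  also have "\<dots> = ?N * Bw * ?S" by simp
  finally show ?thesis .
qed

lemma softmax_lower:
  fixes E :: "('n::finite \<times> 'n) set"
  assumes refl: "\<And>i. (i,i)\<in>E" and K: "\<And>i j. \<bar>R$i$j\<bar> \<le> K" and e: "(j,i)\<in>E"
  shows "exp (-K) / (real CARD('n) * exp K) \<le> masked_softmax E R $ i $ j"
proof -
  let ?D = "\<Sum>k\<in>{k. (k, i) \<in> E}. exp (R $ i $ k)"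
  have pos: "0 < ?D" by (rule sum_pos2[of _ i]) (use refl in auto)
  have "?D \<le> (\<Sum>k\<in>{k. (k, i) \<in> E}. exp K)" by (intro sum_mono) (use K abs_le_D1 in auto)
  also have "\<dots> \<le> (\<Sum>k\<in>(UNIV::'n set). exp K)" by (intro sum_mono2) auto
  finally have D: "?D \<le> real CARD('n) * exp K" by simp
  have num: "exp (-K) \<le> exp (R$i$j)" using K[of i j] by auto
  have "exp (-K) / (real CARD('n) * exp K) \<le> exp (R$i$j) / ?D"
    by (rule frac_le) (use num D pos in auto)
  thus ?thesis using e unfolding masked_softmax_def by simp
qed


theorem theorem1:
  fixes E :: "('n::finite \<times> 'n) set"
    and dQK :: real
    and WQ WK :: "nat \<Rightarrow> real^'k::finite^'d::finite"
    and WV :: "nat \<Rightarrow> real^'d^'d"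
    and X :: "nat \<Rightarrow> real^'d^'n"
  assumes dQK_pos: "dQK > 0"
    and dyn: "\<And>t. X (Suc t) = attn_matrix E dQK (X t) (WQ t) (WK t) ** X t ** WV t"
    and A1: "\<And>i. (i, i) \<in> E"
    and A2: "\<exists>C'. \<forall>t. max (spec_norm (WQ t)) (spec_norm (WK t)) \<le> C'"
    and A3: "bounded (range (\<lambda>k. spec_norm (mat_prod_upto WV k)))"
    and qsc: "quasi_strongly_connected E"
    and r_def: "r = radius E"
  shows "\<exists>\<epsilon>>0. (\<forall>t i j. (j, i) \<in> E \<longrightarrow> attn_matrix E dQK (X t) (WQ t) (WK t) $ i $ j \<ge> \<epsilon>)
              \<and> (\<exists>C>0. \<forall>t. mu (X t) \<le> C * (1 - \<epsilon> ^ r) powr (real t / real r))"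
proof -
  define A where "A t = attn_matrix E dQK (X t) (WQ t) (WK t)" for t
  have st: "stoch (A t)" for t
    unfolding A_def attn_matrix_def by (rule stoch_softmax[OF A1])
  define Wp where "Wp t = (if t = 0 then mat 1 else mat_prod_upto WV (t-1))" for t
  define Y where "Y = Yseq A (X 0)"
  have XY: "X t = Y t ** Wp t" for t
  proof (induction t)
    case 0 then show ?case by (simp add: Y_def Wp_def)
  next
    case (Suc t)
    have W: "Wp t ** WV t = Wp (Suc t)" by (cases t) (simp_all add: Wp_def)
    have "X (Suc t) = A t ** (Y t ** Wp t) ** WV t" using dyn[of t] Suc by (simp add: A_def)
    also have "\<dots> = (A t ** Y t) ** (Wp t ** WV t)" by (simp add: matrix_mul_assoc)
    finally show ?case by (simp add: W Y_def)
  qed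
  obtain b where b: "\<And>k. norm (spec_norm (mat_prod_upto WV k)) \<le> b"
    using A3 unfolding bounded_iff by auto
  define Bw where "Bw = max 1 b"
  have Bw1: "1 \<le> Bw" unfolding Bw_def by simp
  have Wb: "norm (x v* Wp t) \<le> Bw * norm x" for x t
  proof (cases "t = 0")
    case True
    have "norm x \<le> Bw * norm x" using Bw1 mult_right_mono[OF Bw1 norm_ge_zero[of x]] by simp
    then show ?thesis using True by (simp add: Wp_def)
  next
    case False
    have "norm (x v* Wp t) \<le> norm x * spec_norm (Wp t)" by (rule vm_norm)
    also have "\<dots> \<le> norm x * Bw"
      using b[of "t-1"] False unfolding Bw_def Wp_def by (intro mult_left_mono) auto
    finally show ?thesis by (simp add: mult.commute)
  qed
  define M0 where "M0 = (\<Sum>i\<in>UNIV. \<Sum>j\<in>UNIV. \<bar>X 0 $ i $ j\<bar>)"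
  have M0: "0 \<le> M0" unfolding M0_def by (intro sum_nonneg) auto
  have Ybd: "\<bar>Y t $ i $ j\<bar> \<le> M0" for t i j
  proof (induction t arbitrary: i j)
    case 0
    have "\<bar>X 0 $ i $ j\<bar> \<le> (\<Sum>j\<in>UNIV. \<bar>X 0 $ i $ j\<bar>)"
      by (rule member_le_sum[where f="\<lambda>j. \<bar>X 0 $ i $ j\<bar>"]) auto
    also have "\<dots> \<le> M0" unfolding M0_def
      by (rule member_le_sum[where f="\<lambda>i. \<Sum>j\<in>UNIV. \<bar>X 0 $ i $ j\<bar>"]) (auto intro: sum_nonneg)
    finally show ?case by (simp add: Y_def)
  next
    case (Suc t)
    have "\<bar>Y (Suc t) $ i $ j\<bar> = \<bar>\<Sum>k\<in>UNIV. A t $ i $ k * Y t $ k $ j\<bar>"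
      by (simp add: Y_def matrix_matrix_mult_def)
    also have "\<dots> \<le> (\<Sum>k\<in>UNIV. \<bar>A t $ i $ k * Y t $ k $ j\<bar>)" by (rule sum_abs)
    also have "\<dots> \<le> (\<Sum>k\<in>UNIV. A t $ i $ k * M0)"
      by (rule sum_mono) (use st[of t] Suc in \<open>auto simp: stoch_def abs_mult intro: mult_left_mono\<close>)
    also have "\<dots> = M0" using st[of t] by (simp add: stoch_def sum_distrib_right[symmetric])
    finally show ?case .
  qed
  define B where "B = Bw * (real CARD('d) * M0)"
  have B0: "0 \<le> B" unfolding B_def using Bw1 M0 by simp
  have Xrow: "norm (X t $ i) \<le> B" for t i
  proof -
    have "norm (X t $ i) = norm (Y t $ i v* Wp t)" by (simp add: XY row_mult)
    also have "\<dots> \<le> Bw * norm (Y t $ i)" by (rule Wb)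
    also have "norm (Y t $ i) \<le> (\<Sum>j\<in>UNIV. \<bar>Y t $ i $ j\<bar>)" by (rule norm_le_l1_cart)
    also have "\<dots> \<le> (\<Sum>j\<in>(UNIV::'d set). M0)" by (intro sum_mono Ybd)
    finally show ?thesis using Bw1 unfolding B_def by (simp add: mult_left_mono)
  qed
  obtain C' where C': "\<And>t. max (spec_norm (WQ t)) (spec_norm (WK t)) \<le> C'" using A2 by auto
  define C1 where "C1 = max C' 0"
  have C10: "0 \<le> C1" unfolding C1_def by simp
  have rowQ: "norm ((X t ** WQ t) $ i) \<le> B * C1" for t i
  proof -
    have "norm ((X t ** WQ t) $ i) \<le> norm (X t $ i) * spec_norm (WQ t)" by (simp add: row_mult vm_norm)
    also have "\<dots> \<le> B * C1" using C'[of t] Xrow[of t i] C10 B0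
      unfolding C1_def spec_norm_def by (intro mult_mono onorm_pos_le) auto
    finally show ?thesis .
  qed
  have rowK: "norm ((X t ** WK t) $ i) \<le> B * C1" for t i
  proof -
    have "norm ((X t ** WK t) $ i) \<le> norm (X t $ i) * spec_norm (WK t)" by (simp add: row_mult vm_norm)
    also have "\<dots> \<le> B * C1" using C'[of t] Xrow[of t i] C10 B0
      unfolding C1_def spec_norm_def by (intro mult_mono onorm_pos_le) auto
    finally show ?thesis .
  qed
  define K where "K = (1 / sqrt dQK) * ((B * C1) * (B * C1))"
  have Rb: "\<bar>((1 / sqrt dQK) *\<^sub>R ((X t ** WQ t) ** transpose (X t ** WK t))) $ i $ j\<bar> \<le> K" for t i j
  proof -
    have "\<bar>((1 / sqrt dQK) *\<^sub>R ((X t ** WQ t) ** transpose (X t ** WK t))) $ i $ j\<bar>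
        = (1 / sqrt dQK) * \<bar>inner ((X t ** WQ t) $ i) ((X t ** WK t) $ j)\<bar>"
      using dQK_pos by (simp add: mult_transpose_entry abs_mult)
    also have "\<dots> \<le> (1 / sqrt dQK) * (norm ((X t ** WQ t) $ i) * norm ((X t ** WK t) $ j))"
      using dQK_pos by (intro mult_left_mono Cauchy_Schwarz_ineq2) auto
    also have "\<dots> \<le> K" unfolding K_def using dQK_pos B0 C10
      by (intro mult_left_mono mult_mono rowQ rowK) auto
    finally show ?thesis .
  qed
  define \<epsilon> where "\<epsilon> = min (exp (-K) / (real CARD('n) * exp K)) (1/2)"
  have e0: "0 < \<epsilon>" unfolding \<epsilon>_def by simp
  have e1: "\<epsilon> \<le> 1/2" unfolding \<epsilon>_def by (rule min.cobounded2)
  have lb: "\<epsilon> \<le> A t $ i $ j" if "(j,i)\<in>E" for t i j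
  proof -
    have "exp (-K) / (real CARD('n) * exp K) \<le> A t $ i $ j"
      unfolding A_def attn_matrix_def by (rule softmax_lower[OF A1 Rb that])
    thus ?thesis unfolding \<epsilon>_def by linarith
  qed
  obtain c where c: "\<And>v. (c,v) \<in> E^^r" using center_radius[OF A1 qsc] r_def by auto
  have osc0: "0 \<le> osc y" for y :: "real^'n" using osc_diff[of y c c] by simp
  have muY: "mu (X t) \<le> real CARD('n) * Bw * (\<Sum>j\<in>UNIV. osc (col j (Y t)))" for t
    unfolding XY using Wb Bw1 by (intro mu_bound) auto
  have part2: "\<exists>C>0. \<forall>t. mu (X t) \<le> C * (1 - \<epsilon> ^ r) powr (real t / real r)"
  proof (cases "r = 0")
    case True
    have allc: "v = c" for v using c[of v] True by simp
    have "osc y = 0" for y :: "real^'n"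
    proof -
      have "range (\<lambda>i. y$i) = {y$c}" proof - have "(UNIV::'n set) = {c}" using allc by auto thus ?thesis by (metis image_empty image_insert) qed
      thus ?thesis unfolding osc_def by simp
    qed
    hence "mu (X t) \<le> 0" for t using muY[of t] by simp
    thus ?thesis using True by (intro exI[of _ 1]) simp
  next
    case False
    define \<rho> where "\<rho> = 1 - \<epsilon>^r"
    have "\<epsilon>^r \<le> \<epsilon>^1" using False e0 e1 by (intro power_decreasing) auto
    hence rho0: "0 < \<rho>" and rho1: "\<rho> \<le> 1" unfolding \<rho>_def using e1 e0 by auto
    define O0 where "O0 = (\<Sum>j\<in>UNIV. osc (col j (X 0)))"
    have O0: "0 \<le> O0" unfolding O0_def by (intro sum_nonneg osc0)
    define C where "C = real CARD('n) * Bw * O0 / \<rho> + 1"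
    have Cpos: "0 < C" unfolding C_def using O0 Bw1 rho0 by (simp add: add_nonneg_pos)
    have "mu (X t) \<le> C * \<rho> powr (real t / real r)" for t
    proof -
      define q where "q = t div r"
      define s where "s = t mod r"
      have t: "t = q*r + s" unfolding q_def s_def by simp
      have "(\<Sum>j\<in>UNIV. osc (col j (Y t))) \<le> (\<Sum>j\<in>UNIV. \<rho>^q * osc (col j (X 0)))"
        unfolding t Y_def \<rho>_def
        by (intro sum_mono osc_Yseq_decay[where A=A and E=E and c=c, OF st]) (use e0 e1 lb c in auto)
      also have "\<dots> = \<rho>^q * O0" unfolding O0_def by (simp add: sum_distrib_left)
      finally have m1: "mu (X t) \<le> real CARD('n) * Bw * (\<rho>^q * O0)"
        using muY[of t] Bw1 by (smt (verit) mult_left_mono of_nat_0_le_iff mult_nonneg_nonneg)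
      have qge: "real t / real r - 1 \<le> real q"
      proof -
        have "real t = real q * real r + real s" using t by simp
        moreover have "real s < real r" unfolding s_def using False by simp
        ultimately have "real t < (real q + 1) * real r" by (simp add: algebra_simps)
        thus ?thesis using False by (simp add: field_simps)
      qed
      have "\<rho>^q = \<rho> powr real q" using rho0 by (simp add: powr_realpow)
      also have "\<dots> \<le> \<rho> powr (real t / real r - 1)" by (rule powr_mono'[OF qge]) (use rho0 rho1 in auto)
      also have "\<dots> = \<rho> powr (real t / real r) / \<rho>" using rho0 by (simp add: powr_diff)
      finally have p: "\<rho>^q \<le> \<rho> powr (real t / real r) / \<rho>" .
      have "mu (X t) \<le> real CARD('n) * Bw * O0 * (\<rho> powr (real t / real r) / \<rho>)"
        using m1 p O0 Bw1 by (smt (verit) mult_left_mono of_nat_0_le_iff mult_nonneg_nonneg mult.assoc mult.commute)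
      also have "\<dots> = (real CARD('n) * Bw * O0 / \<rho>) * \<rho> powr (real t / real r)" by simp
      also have "\<dots> \<le> C * \<rho> powr (real t / real r)" unfolding C_def by (simp add: distrib_right)
      finally show ?thesis .
    qed
    thus ?thesis using Cpos unfolding \<rho>_def by blast
  qed
  show ?thesis using e0 lb part2 unfolding A_def by blast
qed

end
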